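(* Let $k\in\mathbb{N}$, let $A\subseteq\mathbb{N}$ with $\min(A)=0$ and $\max(A)\le k$, and suppose $A=B+C$ with $B,C\subseteq\mathbb{N}$ and $\max(B)\le\max(C)$. Define \[C_B=C\cup\{s\in\{0,\ldots,k\}\setminus A: s<\max(B)\}\cup\{s-\max(B): s\in\{0,\ldots,k\}\setminus A,\ s\ge\max(B)\}.\] Then $B+C_B=\{0,1,\ldots,k\}$.
   Context: $\mathbb{N}=\{0,1,\ldots\}$ and $X+Y=\{x+y:x\in X,y\in Y\}$. *)

theory Defs
  imports Main
begin

definition sumset :: "nat set \<Rightarrow> nat set \<Rightarrow> nat set" where
  "sumset X Y = {x + y | x y. x \<in> X \<and> y \<in> Y}"

end

theory Submission
  imports Defs
begin

theorem mainTheorem14: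
  fixes k :: nat and A B C :: "nat set"
  assumes "finite A" and "A \<noteq> {}"
    and "Min A = 0" and "Max A \<le> k"
    and "A = sumset B C"
    and "Max B \<le> Max C"
  shows "sumset B (C \<union> {s \<in> {0..k} - A. s < Max B}
                     \<union> {s - Max B | s. s \<in> {0..k} - A \<and> s \<ge> Max B}) = {0..k}"
proof -
  have A0: "0 \<in> A" using assms(1,2,3) Min_in by metis
  then obtain x y where xy: "x \<in> B" "y \<in> C" "0 = x + y" using assms(5) unfolding sumset_def by blast
  hence B0: "0 \<in> B" and C0: "0 \<in> C" by auto
  have BA: "B \<subseteq> A" using C0 assms(5) unfolding sumset_def by force
  have CA: "C \<subseteq> A" using B0 assms(5) unfolding sumset_def by force
  have fB: "finite B" and fC: "finite C" using BA CA assms(1) finite_subset by auto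
  define b where "b = Max B"
  have bB: "b \<in> B" using fB B0 b_def Max_in by blast
  have cC: "Max C \<in> C" using fC C0 Max_in by blast
  have "b + Max C \<in> A" using bB cC assms(5) unfolding sumset_def by blast
  hence bk: "b + Max C \<le> k" using assms(1,4) Max_ge order_trans by blast
  have b2: "2 * b \<le> k" using bk assms(6) b_def by simp
  have xb: "\<And>x. x \<in> B \<Longrightarrow> x \<le> b" using fB b_def by simp
  have Ak: "\<And>a. a \<in> A \<Longrightarrow> a \<le> k" using assms(1,4) Max_ge order_trans by blast
  show ?thesis
  proof
    show "sumset B (C \<union> {s \<in> {0..k} - A. s < Max B}
                     \<union> {s - Max B | s. s \<in> {0..k} - A \<and> s \<ge> Max B}) \<subseteq> {0..k}"
    proof
      fix t assume "t \<in> sumset B (C \<union> {s \<in> {0..k} - A. s < Max B}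
                     \<union> {s - Max B | s. s \<in> {0..k} - A \<and> s \<ge> Max B})"
      then obtain x z where xz: "x \<in> B" "t = x + z"
        "z \<in> C \<or> (z \<in> {0..k} - A \<and> z < b) \<or> (\<exists>s. z = s - b \<and> s \<in> {0..k} - A \<and> s \<ge> b)"
        unfolding sumset_def b_def by blast
      have "x \<le> b" using xb xz(1) .
      moreover have "x + z \<in> A" if "z \<in> C" using that xz(1) assms(5) unfolding sumset_def by blast
      ultimately show "t \<in> {0..k}" using xz(3) xz(2) Ak b2 by auto
    qed
  next
    show "{0..k} \<subseteq> sumset B (C \<union> {s \<in> {0..k} - A. s < Max B}
                     \<union> {s - Max B | s. s \<in> {0..k} - A \<and> s \<ge> Max B})"
    proof
      fix t assume t: "t \<in> {0..k}"
      show "t \<in> sumset B (C \<union> {s \<in> {0..k} - A. s < Max B}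
                     \<union> {s - Max B | s. s \<in> {0..k} - A \<and> s \<ge> Max B})"
      proof (cases "t \<in> A")
        case True
        then obtain x y where "x \<in> B" "y \<in> C" "t = x + y" using assms(5) unfolding sumset_def by blast
        thus ?thesis unfolding sumset_def by blast
      next
        case False
        show ?thesis
        proof (cases "t < b")
          case True
          hence "t = 0 + t" "t \<in> {s \<in> {0..k} - A. s < Max B}" using t False b_def by auto
          thus ?thesis using B0 unfolding sumset_def by blast
        next
          case ge: False
          hence "t = b + (t - b)" "t - b \<in> {s - Max B | s. s \<in> {0..k} - A \<and> s \<ge> Max B}"
            using t False b_def by auto
          thus ?thesis using bB unfolding sumset_def by blast
        qed
      qed
    qed
  qed
qed

end
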